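(* Let $n\ge1$, $\mathbb{P}\in\mathcal{P}_n$, $\gamma\in S_{inv}$ and $\pi\in S_n$. Then $R_n(\mathbb{P})=R_n({}^{\gamma}\mathbb{P}\pi)$.
   Context: Scheduling on two machines with $n$ tasks. A processing-time matrix is $T\in\mathbb{R}_{++}^{2\times n}$; an allocation is $X\in\{0,1\}^{2\times n}$ with $X_{1j}+X_{2j}=1$; makespan $M(X,T)=\max_{i\in\{1,2\}}\sum_jX_{ij}T_{ij}$; $M^*(T)=\min_XM(X,T)$. $\mathcal{P}_n$ is the set of Borel probability measures on $\mathbb{R}^n$ supported in $\mathbb{R}_{++}^n$. For $\mathbb{P}\in\mathcal{P}_n$, algorithm $\mathcal{A}^{\mathbb{P}}$ draws $\mathbf{z}\sim\mathbb{P}$ and sends task $j$ to machine 1 iff $T_{1j}/T_{2j}<z_j$ (else to machine 2); $M(\mathbb{P},T)$ is its expected makespan, $R_n(\mathbb{P},T)=M(\mathbb{P},T)/M^*(T)$, $R_n(\mathbb{P})=\sup_TR_n(\mathbb{P},T)\in[1,\infty]$. $S_n$ is the symmetric group on $[n]$; for $\mathbf{z}\in\mathbb{R}^n$ and $\pi\in S_n$, $\mathbf{z}\pi$ is the vector obtained by permuting the entries of $\mathbf{z}$ by $\pi$. $S_{inv}=\{id,inv\}$ acts on $\mathbb{R}_{++}^n$ by ${}^{id}\mathbf{x}=\mathbf{x}$ and ${}^{inv}\mathbf{x}=(1/x_1,\dots,1/x_n)$. For $\mathbb{P}\in\mathcal{P}_n$, ${}^{\gamma}\mathbb{P}\pi\in\mathcal{P}_n$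 denotes the distribution of ${}^{\gamma}\mathbf{z}\pi$ where $\mathbf{z}\sim\mathbb{P}$. *)

theory Defs
  imports "HOL-Probability.Probability"
begin

text \<open>Tasks are indexed by a finite type 'n (so n = CARD('n) >= 1).
  A processing-time matrix T is given by its two rows T1, T2 :: real^'n.
  An allocation X is represented by the set S of tasks sent to machine 1.\<close>

definition pos_vec :: "real^'n \<Rightarrow> bool" where
  "pos_vec x \<longleftrightarrow> (\<forall>j. 0 < x $ j)"

definition makespan :: "'n::finite set \<Rightarrow> real^'n \<Rightarrow> real^'n \<Rightarrow> real" where
  "makespan S T1 T2 = max (\<Sum>j\<in>S. T1 $ j) (\<Sum>j\<in>-S. T2 $ j)"

definition opt_makespan :: "real^'n::finite \<Rightarrow> real^'n \<Rightarrow> real" where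
  "opt_makespan T1 T2 = Min ((\<lambda>S. makespan S T1 T2) ` UNIV)"

definition alloc_of :: "real^'n \<Rightarrow> real^'n \<Rightarrow> real^'n \<Rightarrow> 'n set" where
  "alloc_of T1 T2 z = {j. T1 $ j / T2 $ j < z $ j}"

definition exp_makespan :: "(real^'n::finite) measure \<Rightarrow> real^'n \<Rightarrow> real^'n \<Rightarrow> real" where
  "exp_makespan P T1 T2 = (\<integral>z. makespan (alloc_of T1 T2 z) T1 T2 \<partial>P)"

definition ratio_T :: "(real^'n::finite) measure \<Rightarrow> real^'n \<Rightarrow> real^'n \<Rightarrow> real" where
  "ratio_T P T1 T2 = exp_makespan P T1 T2 / opt_makespan T1 T2"

definition approx_ratio :: "(real^'n::finite) measure \<Rightarrow> ereal" where
  "approx_ratio P = (SUP T \<in> {(T1, T2). pos_vec T1 \<and> pos_vec T2}.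
      ereal (ratio_T P (fst T) (snd T)))"

text \<open>The class P_n: Borel probability measures on R^n supported in the positive orthant.\<close>
definition valid_dist :: "(real^'n) measure \<Rightarrow> bool" where
  "valid_dist P \<longleftrightarrow> prob_space P \<and> sets P = sets borel \<and> (AE z in P. pos_vec z)"

definition perm_vec :: "('n \<Rightarrow> 'n) \<Rightarrow> real^'n \<Rightarrow> real^'n" where
  "perm_vec \<pi> z = (\<chi> j. z $ (\<pi> j))"

definition inv_vec :: "real^'n \<Rightarrow> real^'n" where
  "inv_vec z = (\<chi> j. 1 / z $ j)"

end

theory Submission imports Defs begin

lemma vec_nth_meas: "(\<lambda>z::real^'n. z $ j) \<in> borel_measurable borel"
  by (intro borel_measurable_continuous_onI continuous_intros)

lemma borel_measurable_vec:
  fixes f :: "'a \<Rightarrow> real^'n"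
  assumes "\<And>j. (\<lambda>x. f x $ j) \<in> borel_measurable M"
  shows "f \<in> borel_measurable M"
proof (rule borel_measurable_euclidean_space[THEN iffD2], rule ballI)
  fix i :: "real^'n" assume "i \<in> Basis"
  then obtain k where "i = axis k 1" by (auto simp: Basis_vec_def)
  then have "(\<lambda>x. f x \<bullet> i) = (\<lambda>x. f x $ k)" by (simp add: inner_axis)
  with assms[of k] show "(\<lambda>x. f x \<bullet> i) \<in> borel_measurable M" by (simp only:)
qed

lemma makespan_alt:
  "makespan S a b = max (\<Sum>j\<in>UNIV. if j \<in> S then a$j else 0) (\<Sum>j\<in>UNIV. if j \<in> S then 0 else b$j)"
  unfolding makespan_def by (simp add: sum.If_cases Compl_eq_Diff_UNIV)

lemma lt_set: "{x \<in> space borel. c < (x::real^'n::finite)$j} \<in> sets borel"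
  by (rule borel_measurable_less) simp_all

lemma le_set: "{x \<in> space borel. c \<le> (x::real^'n::finite)$j} \<in> sets borel"
  by (rule borel_measurable_le) simp_all

lemma ms_meas_lt:
  "(\<lambda>z. makespan {j. c$j < (z::real^'n::finite)$j} a b) \<in> borel_measurable borel"
  unfolding makespan_alt mem_Collect_eq
  by (intro borel_measurable_max borel_measurable_sum measurable_If borel_measurable_const lt_set)

lemma ms_meas_le:
  "(\<lambda>z. makespan {j. c$j \<le> (z::real^'n::finite)$j} a b) \<in> borel_measurable borel"
  unfolding makespan_alt mem_Collect_eq
  by (intro borel_measurable_max borel_measurable_sum measurable_If borel_measurable_const le_set)

lemma alloc_meas:
  "(\<lambda>z. makespan (alloc_of T1 T2 z) a b) \<in> borel_measurable borel"
  using ms_meas_lt[of "\<chi> j. T1$j/T2$j" a b] unfolding alloc_of_def by simp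

lemma inv_vec_meas: "inv_vec \<in> borel_measurable borel"
  unfolding inv_vec_def
  by (rule borel_measurable_vec) (simp add: borel_measurable_divide[OF borel_measurable_const vec_nth_meas])

lemma perm_vec_meas: "perm_vec \<pi> \<in> borel_measurable borel"
  unfolding perm_vec_def by (rule borel_measurable_vec) (simp add: vec_nth_meas)

lemma pos_vec_sets: "{x\<in>space borel. pos_vec (x::real^'n::finite)} \<in> sets borel"
proof -
  have "{x\<in>space borel. pos_vec (x::real^'n)} = (\<Inter>j\<in>UNIV. {x \<in> space borel. 0 < x$j})"
    unfolding pos_vec_def by auto
  also have "\<dots> \<in> sets borel" by (rule sets.finite_INT) (auto intro: lt_set)
  finally show ?thesis .
qed

lemma ms_nonneg: "pos_vec a \<Longrightarrow> pos_vec b \<Longrightarrow> 0 \<le> makespan S a b"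
  unfolding makespan_def pos_vec_def by (simp add: le_max_iff_disj sum_nonneg less_imp_le)

lemma ms_bound: "pos_vec a \<Longrightarrow> pos_vec b \<Longrightarrow> makespan S (a::real^'n::finite) b \<le> sum (($) a) UNIV + sum (($) b) UNIV"
proof -
  assume a: "pos_vec a" and b: "pos_vec b"
  have 1: "sum (($) a) S \<le> sum (($) a) UNIV"
    by (rule sum_mono2) (use a in \<open>auto simp: pos_vec_def less_imp_le\<close>)
  have 2: "sum (($) b) (-S) \<le> sum (($) b) UNIV"
    by (rule sum_mono2) (use b in \<open>auto simp: pos_vec_def less_imp_le\<close>)
  have 3: "0 \<le> sum (($) a) UNIV" "0 \<le> sum (($) b) UNIV"
    using a b by (auto simp: pos_vec_def less_imp_le intro: sum_nonneg)
  show ?thesis unfolding makespan_def using 1 2 3 by simp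
qed

lemma ms_pos: "pos_vec a \<Longrightarrow> pos_vec b \<Longrightarrow> 0 < makespan S (a::real^'n::finite) b"
proof -
  assume a: "pos_vec a" and b: "pos_vec b"
  show ?thesis
  proof (cases "S = UNIV")
    case True
    have "0 < sum (($) a) S" using a True by (auto simp: pos_vec_def intro!: sum_pos)
    then show ?thesis unfolding makespan_def by simp
  next
    case False
    then have "-S \<noteq> {}" by auto
    then have "0 < sum (($) b) (-S)" using b by (auto simp: pos_vec_def intro!: sum_pos)
    then show ?thesis unfolding makespan_def by simp
  qed
qed

lemma opt_le: "opt_makespan a b \<le> makespan S (a::real^'n::finite) b"
  unfolding opt_makespan_def by (rule Min_le) auto

lemma opt_attained: "\<exists>S. opt_makespan a b = makespan S (a::real^'n::finite) b"
proof -
  have "Min ((\<lambda>S. makespan S a b) ` UNIV) \<in> (\<lambda>S. makespan S a b) ` UNIV"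
    by (rule Min_in) auto
  then obtain S where "Min ((\<lambda>S. makespan S a b) ` UNIV) = makespan S a b" by blast
  then show ?thesis unfolding opt_makespan_def by blast
qed

lemma opt_pos: "pos_vec a \<Longrightarrow> pos_vec b \<Longrightarrow> 0 < opt_makespan (a::real^'n::finite) b"
  using opt_attained[of a b] ms_pos by metis

lemma ms_swap: "makespan (-S) a b = makespan S b a"
  unfolding makespan_def by (simp add: max.commute)

lemma opt_swap: "opt_makespan a b = opt_makespan (b::real^'n::finite) a"
proof -
  have u: "uminus ` (UNIV :: 'n set set) = UNIV" by (metis surj_def double_compl)
  have "(\<lambda>S. makespan S a b) ` UNIV = (\<lambda>S. makespan S a b) ` (uminus ` UNIV)" by (simp add: u)
  also have "\<dots> = (\<lambda>S. makespan S b a) ` UNIV" by (simp add: image_image ms_swap)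
  finally show ?thesis unfolding opt_makespan_def by simp
qed

lemma perm_vec_nth: "perm_vec \<sigma> a $ k = a $ \<sigma> k"
  unfolding perm_vec_def by simp

lemma ms_perm: assumes "\<sigma> permutes UNIV"
  shows "makespan (\<sigma> ` B) a b = makespan B (perm_vec \<sigma> a) (perm_vec \<sigma> b)"
proof -
  have bij: "bij \<sigma>" using assms permutes_bij by blast
  then have inj: "inj \<sigma>" by (rule bij_is_inj)
  have c: "- (\<sigma> ` B) = \<sigma> ` (-B)" using bij_image_Compl_eq[OF bij] by simp
  show ?thesis unfolding makespan_def c
    by (simp add: sum.reindex[OF inj_on_subset[OF inj subset_UNIV]] perm_vec_nth)
qed

lemma opt_perm: assumes "\<sigma> permutes UNIV"
  shows "opt_makespan (perm_vec \<sigma> a) (perm_vec \<sigma> b) = opt_makespan a (b::real^'n::finite)"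
proof -
  have bij: "bij \<sigma>" using assms permutes_bij by blast
  have u: "image \<sigma> ` (UNIV :: 'n set set) = UNIV"
    using bij by (metis bij_is_surj surj_image_vimage_eq surj_def)
  have "(\<lambda>S. makespan S a b) ` UNIV = (\<lambda>S. makespan S a b) ` (image \<sigma> ` UNIV)" by (simp add: u)
  also have "\<dots> = (\<lambda>B. makespan B (perm_vec \<sigma> a) (perm_vec \<sigma> b)) ` UNIV"
    by (simp add: image_image ms_perm[OF assms])
  finally show ?thesis unfolding opt_makespan_def by simp
qed

lemma pos_perm: assumes "\<sigma> permutes UNIV" shows "pos_vec (perm_vec \<sigma> a) \<longleftrightarrow> pos_vec a"
  unfolding pos_vec_def perm_vec_nth
  by (metis assms permutes_inverses(1))

lemma perm_perm: assumes "\<pi> permutes UNIV"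
  shows "perm_vec (inv \<pi>) (perm_vec \<pi> a) = a"
  unfolding perm_vec_def by (simp add: vec_eq_iff permutes_inverses(1)[OF assms])

lemma alloc_perm: assumes "\<pi> permutes UNIV"
  shows "alloc_of a b (perm_vec \<pi> w) = inv \<pi> ` alloc_of (perm_vec (inv \<pi>) a) (perm_vec (inv \<pi>) b) w"
  using assms unfolding alloc_of_def perm_vec_nth
  apply (auto simp: image_iff permutes_inverses)
  by (metis permutes_inverses(2))

lemma exp_perm:
  assumes "\<pi> permutes UNIV" and sQ: "sets Q = sets borel"
  shows "exp_makespan (distr Q borel (perm_vec \<pi>)) a b
       = exp_makespan Q (perm_vec (inv \<pi>) a) (perm_vec (inv \<pi>) b)"
proof -
  have m: "perm_vec \<pi> \<in> measurable Q borel"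
    using measurable_cong_sets[OF sQ refl] perm_vec_meas by blast
  have ip: "inv \<pi> permutes UNIV" using assms(1) by (rule permutes_inv)
  show ?thesis unfolding exp_makespan_def
    by (simp add: integral_distr[OF m alloc_meas] alloc_perm[OF assms(1)] ms_perm[OF ip])
qed

lemma approx_perm:
  fixes Q :: "(real^'n::finite) measure"
  assumes p: "\<pi> permutes UNIV" and sQ: "sets Q = sets borel"
  shows "approx_ratio (distr Q borel (perm_vec \<pi>)) = approx_ratio Q"
proof -
  define \<phi> where "\<phi> = (\<lambda>(a::real^'n,b::real^'n). (perm_vec (inv \<pi>) a, perm_vec (inv \<pi>) b))"
  let ?A = "{(T1::real^'n, T2::real^'n). pos_vec T1 \<and> pos_vec T2}"
  have ip: "inv \<pi> permutes UNIV" using p by (rule permutes_inv)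
  have img: "\<phi> ` ?A = ?A"
  proof
    show "\<phi> ` ?A \<subseteq> ?A" unfolding \<phi>_def using pos_perm[OF ip] by auto
    show "?A \<subseteq> \<phi> ` ?A"
    proof
      fix T assume "T \<in> ?A"
      then obtain a b where T: "T = (a,b)" "pos_vec a" "pos_vec b" by auto
      have "T = \<phi> (perm_vec \<pi> a, perm_vec \<pi> b)" unfolding \<phi>_def T by (simp add: perm_perm[OF p])
      moreover have "(perm_vec \<pi> a, perm_vec \<pi> b) \<in> ?A" using T pos_perm[OF p] by auto
      ultimately show "T \<in> \<phi> ` ?A" by blast
    qed
  qed
  have r: "ratio_T (distr Q borel (perm_vec \<pi>)) (fst T) (snd T) = ratio_T Q (fst (\<phi> T)) (snd (\<phi> T))" for T
    unfolding ratio_T_def \<phi>_def by (simp add: case_prod_beta exp_perm[OF p sQ] opt_perm[OF ip])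
  have "approx_ratio (distr Q borel (perm_vec \<pi>)) = (SUP T\<in>?A. ereal (ratio_T Q (fst (\<phi> T)) (snd (\<phi> T))))"
    unfolding approx_ratio_def r ..
  also have "\<dots> = (SUP T\<in>\<phi> ` ?A. ereal (ratio_T Q (fst T) (snd T)))"
    by (simp add: image_image)
  also have "\<dots> = approx_ratio Q" unfolding img approx_ratio_def ..
  finally show ?thesis .
qed


lemma alloc_inv:
  assumes "pos_vec a" "pos_vec b" "pos_vec z"
  shows "alloc_of a b (inv_vec z) = - {j. b$j/a$j \<le> z$j}"
proof -
  have "(a$j / b$j < 1 / z$j) \<longleftrightarrow> \<not> (b$j/a$j \<le> z$j)" for j
  proof -
    have "0 < a$j" "0 < b$j" "0 < z$j" using assms by (auto simp: pos_vec_def)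
    then show ?thesis by (auto simp: field_simps)
  qed
  then show ?thesis unfolding alloc_of_def inv_vec_def by auto
qed

lemma ms_scale_le: "pos_vec a \<Longrightarrow> pos_vec b \<Longrightarrow> 0 \<le> c \<Longrightarrow> c \<le> 1 \<Longrightarrow>
    makespan S (c *\<^sub>R b) a \<le> makespan S (b::real^'n::finite) a"
proof -
  assume h: "pos_vec a" "pos_vec b" "0 \<le> c" "c \<le> 1"
  have "0 \<le> sum (($) b) S" using h(2) by (auto simp: pos_vec_def less_imp_le intro: sum_nonneg)
  then have "c * sum (($) b) S \<le> sum (($) b) S" using h(3,4) by (rule mult_left_le_one_le)
  then show ?thesis unfolding makespan_def by (simp add: sum_distrib_left[symmetric])
qed

lemma ms_scale_ge: "pos_vec a \<Longrightarrow> pos_vec b \<Longrightarrow> 0 \<le> c \<Longrightarrow> c \<le> 1 \<Longrightarrow>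
    c * makespan S (b::real^'n::finite) a \<le> makespan S (c *\<^sub>R b) a"
proof -
  assume h: "pos_vec a" "pos_vec b" "0 \<le> c" "c \<le> 1"
  have "0 \<le> sum (($) a) (-S)" using h(1) by (auto simp: pos_vec_def less_imp_le intro: sum_nonneg)
  then have 1: "c * sum (($) a) (-S) \<le> sum (($) a) (-S)" using h(3,4) by (rule mult_left_le_one_le)
  have "c * makespan S b a = max (c * sum (($) b) S) (c * sum (($) a) (-S))"
    unfolding makespan_def using h(3) by (simp add: max_mult_distrib_left)
  also have "\<dots> \<le> max (c * sum (($) b) S) (sum (($) a) (-S))" using 1 by simp
  also have "\<dots> = makespan S (c *\<^sub>R b) a" unfolding makespan_def by (simp add: sum_distrib_left[symmetric])
  finally show ?thesis .
qed

lemma opt_scale_le: "pos_vec a \<Longrightarrow> pos_vec b \<Longrightarrow> 0 \<le> c \<Longrightarrow> c \<le> 1 \<Longrightarrow>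
    opt_makespan (c *\<^sub>R b) a \<le> opt_makespan (b::real^'n::finite) a"
  by (metis opt_attained opt_le ms_scale_le order_trans)

lemma opt_scale_ge: "pos_vec a \<Longrightarrow> pos_vec b \<Longrightarrow> 0 \<le> c \<Longrightarrow> c \<le> 1 \<Longrightarrow>
    c * opt_makespan (b::real^'n::finite) a \<le> opt_makespan (c *\<^sub>R b) a"
proof -
  assume h: "pos_vec a" "pos_vec b" "0 \<le> c" "c \<le> 1"
  obtain S where S: "opt_makespan (c *\<^sub>R b) a = makespan S (c *\<^sub>R b) a" using opt_attained by blast
  have "c * opt_makespan b a \<le> c * makespan S b a" using h(3) opt_le by (rule mult_left_mono[rotated])
  also have "\<dots> \<le> makespan S (c *\<^sub>R b) a" using ms_scale_ge[OF h] .
  finally show ?thesis using S by simp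
qed

lemma pos_scale: "pos_vec b \<Longrightarrow> 0 < c \<Longrightarrow> pos_vec (c *\<^sub>R b)"
  unfolding pos_vec_def by simp


lemma meas_P: "sets P = sets borel \<Longrightarrow> f \<in> borel_measurable borel \<Longrightarrow> f \<in> borel_measurable P"
  using measurable_cong_sets[of P borel borel borel] by simp

lemma approx_inv_le:
  fixes P :: "(real^'n::finite) measure"
  assumes v: "valid_dist P"
  shows "approx_ratio (distr P borel inv_vec) \<le> approx_ratio P"
  unfolding approx_ratio_def[of "distr P borel inv_vec"]
proof (rule SUP_least)
  fix T assume "T \<in> {(T1::real^'n, T2::real^'n). pos_vec T1 \<and> pos_vec T2}"
  then obtain a b where T: "T = (a,b)" and a: "pos_vec a" and b: "pos_vec b" by auto
  interpret prob_space P using v unfolding valid_dist_def by simp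
  have sP: "sets P = sets borel" using v unfolding valid_dist_def by simp
  have AEpos: "AE z in P. pos_vec z" using v unfolding valid_dist_def by simp
  define N where "N z = {j. b$j/a$j \<le> z$j}" for z :: "real^'n"
  define f where "f z = makespan (N z) b a" for z
  define c where "c k = 1 - inverse (real (Suc (Suc k)))" for k
  have c0: "0 < c k" "c k \<le> 1" "c k < 1" for k unfolding c_def by (auto simp: field_simps)
  have clim: "c \<longlonglongrightarrow> 1"
  proof -
    have "(\<lambda>k. inverse (real (Suc (Suc k)))) \<longlonglongrightarrow> 0"
      by (rule LIMSEQ_Suc[OF LIMSEQ_inverse_real_of_nat])
    from tendsto_diff[OF tendsto_const this, of 1] show ?thesis unfolding c_def by simp
  qed
  have fmeas: "f \<in> borel_measurable P"
    using ms_meas_le[of "\<chi> j. b$j/a$j" b a] unfolding f_def N_def by (intro meas_P[OF sP]) simp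
  have invm: "inv_vec \<in> measurable P borel" by (rule meas_P[OF sP]) (rule inv_vec_meas)
  have e1: "exp_makespan (distr P borel inv_vec) a b = integral\<^sup>L P f"
    unfolding exp_makespan_def
  proof (subst integral_distr[OF invm alloc_meas], rule integral_cong_AE)
    show "(\<lambda>x. makespan (alloc_of a b (inv_vec x)) a b) \<in> borel_measurable P"
      by (rule meas_P[OF sP]) (rule measurable_compose[OF inv_vec_meas alloc_meas])
    show "f \<in> borel_measurable P" by (rule fmeas)
    show "AE x in P. makespan (alloc_of a b (inv_vec x)) a b = f x"
      using AEpos by eventually_elim (simp add: alloc_inv[OF a b] ms_swap f_def N_def)
  qed
  define s where "s k z = makespan (alloc_of (c k *\<^sub>R b) a z) (c k *\<^sub>R b) a" for k z
  define W where "W = sum (($) b) UNIV + sum (($) a) UNIV"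
  have conv: "(\<lambda>k. integral\<^sup>L P (s k)) \<longlonglongrightarrow> integral\<^sup>L P f"
  proof (rule integral_dominated_convergence[where w="\<lambda>_. W"])
    show "f \<in> borel_measurable P" by (rule fmeas)
    show "s k \<in> borel_measurable P" for k unfolding s_def by (rule meas_P[OF sP]) (rule alloc_meas)
    show "integrable P (\<lambda>_. W)" by simp
    show "AE x in P. norm (s k x) \<le> W" for k
    proof (rule AE_I2)
      fix x
      have "0 \<le> s k x" unfolding s_def using ms_nonneg pos_scale[OF b c0(1)] a by blast
      moreover have "s k x \<le> W" unfolding s_def W_def
        using ms_scale_le[OF a b less_imp_le[OF c0(1)] c0(2)] ms_bound[OF b a] order_trans by blast
      ultimately show "norm (s k x) \<le> W" by simp
    qed
    show "AE x in P. (\<lambda>k. s k x) \<longlonglongrightarrow> f x"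
      using AEpos
    proof eventually_elim
      fix z :: "real^'n" assume z: "pos_vec z"
      have ev: "\<forall>\<^sub>F k in sequentially. \<forall>j. (c k * b$j / a$j < z$j \<longleftrightarrow> b$j/a$j \<le> z$j)"
      proof (rule eventually_all_finite)
        fix j
        have pj: "0 < a$j" "0 < b$j" "0 < z$j" using a b z by (auto simp: pos_vec_def)
        show "\<forall>\<^sub>F k in sequentially. (c k * b$j / a$j < z$j \<longleftrightarrow> b$j/a$j \<le> z$j)"
        proof (cases "b$j/a$j \<le> z$j")
          case True
          have "c k * b$j / a$j < z$j" for k
          proof -
            have "c k * b$j / a$j = c k * (b$j / a$j)" by simp
            also have "\<dots> < 1 * (b$j/a$j)"
              by (rule mult_strict_right_mono[OF c0(3)]) (use pj in simp)
            also have "\<dots> = b$j/a$j" by simp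
            finally show ?thesis using True by simp
          qed
          then show ?thesis using True by simp
        next
          case False
          have "(\<lambda>k. c k * (b$j/a$j)) \<longlonglongrightarrow> 1 * (b$j/a$j)"
            by (rule tendsto_mult[OF clim tendsto_const])
          then have "\<forall>\<^sub>F k in sequentially. z$j < c k * (b$j/a$j)"
            using False by (intro order_tendstoD(1)) auto
          then show ?thesis by eventually_elim (use False in auto)
        qed
      qed
      have ev2: "\<forall>\<^sub>F k in sequentially. s k z = makespan (N z) (c k *\<^sub>R b) a"
        using ev by eventually_elim (simp add: s_def alloc_of_def N_def)
      have lim: "(\<lambda>k. makespan (N z) (c k *\<^sub>R b) a) \<longlonglongrightarrow> f z"
      proof -
        have eq: "makespan (N z) (c k *\<^sub>R b) a = max (c k * sum (($) b) (N z)) (sum (($) a) (- N z))" for k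
          unfolding makespan_def by (simp add: sum_distrib_left)
        have "(\<lambda>k. max (c k * sum (($) b) (N z)) (sum (($) a) (- N z)))
           \<longlonglongrightarrow> max (1 * sum (($) b) (N z)) (sum (($) a) (- N z))"
          by (intro tendsto_max tendsto_mult clim tendsto_const)
        moreover have e2: "(\<lambda>k. makespan (N z) (c k *\<^sub>R b) a) = (\<lambda>k. max (c k * sum (($) b) (N z)) (sum (($) a) (- N z)))"
          by (rule ext) (rule eq)
        moreover have e3: "f z = max (sum (($) b) (N z)) (sum (($) a) (- N z))"
          unfolding f_def makespan_def ..
        ultimately show ?thesis by simp
      qed
      show "(\<lambda>k. s k z) \<longlonglongrightarrow> f z"
        using tendsto_cong[OF ev2] lim by simp
    qed
  qed
  have optlim: "(\<lambda>k. opt_makespan (c k *\<^sub>R b) a) \<longlonglongrightarrow> opt_makespan b a"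
  proof (rule tendsto_sandwich[where f="\<lambda>k. c k * opt_makespan b a" and h="\<lambda>k. opt_makespan b a"])
    show "\<forall>\<^sub>F k in sequentially. c k * opt_makespan b a \<le> opt_makespan (c k *\<^sub>R b) a"
      using opt_scale_ge[OF a b less_imp_le[OF c0(1)] c0(2)] by simp
    show "\<forall>\<^sub>F k in sequentially. opt_makespan (c k *\<^sub>R b) a \<le> opt_makespan b a"
      using opt_scale_le[OF a b less_imp_le[OF c0(1)] c0(2)] by simp
    show "(\<lambda>k. c k * opt_makespan b a) \<longlonglongrightarrow> opt_makespan b a"
      using tendsto_mult[OF clim tendsto_const, of "opt_makespan b a"] by simp
  qed simp
  have opos: "opt_makespan b a \<noteq> 0" using opt_pos[OF b a] by simp
  have rlim: "(\<lambda>k. ratio_T P (c k *\<^sub>R b) a) \<longlonglongrightarrow> ratio_T (distr P borel inv_vec) a b"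
  proof -
    have "(\<lambda>k. integral\<^sup>L P (s k) / opt_makespan (c k *\<^sub>R b) a) \<longlonglongrightarrow> integral\<^sup>L P f / opt_makespan b a"
      by (rule tendsto_divide[OF conv optlim opos])
    then show ?thesis
      unfolding ratio_T_def e1 opt_swap[of a b] unfolding exp_makespan_def s_def by simp
  qed
  have bnd: "ereal (ratio_T P (c k *\<^sub>R b) a) \<le> approx_ratio P" for k
    unfolding approx_ratio_def
    by (rule SUP_upper2[where i="(c k *\<^sub>R b, a)"]) (auto simp: pos_scale[OF b c0(1)] a)
  have "(\<lambda>k. ereal (ratio_T P (c k *\<^sub>R b) a)) \<longlonglongrightarrow> ereal (ratio_T (distr P borel inv_vec) a b)"
    using rlim by (simp add: lim_ereal)
  then have "ereal (ratio_T (distr P borel inv_vec) a b) \<le> approx_ratio P"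
    by (rule LIMSEQ_le_const2) (use bnd in auto)
  then show "ereal (ratio_T (distr P borel inv_vec) (fst T) (snd T)) \<le> approx_ratio P"
    using T by simp
qed


lemma approx_inv_eq:
  fixes P :: "(real^'n::finite) measure"
  assumes v: "valid_dist P"
  shows "approx_ratio (distr P borel inv_vec) = approx_ratio P"
proof (rule antisym)
  show "approx_ratio (distr P borel inv_vec) \<le> approx_ratio P" by (rule approx_inv_le[OF v])
  interpret prob_space P using v unfolding valid_dist_def by simp
  have sP: "sets P = sets borel" using v unfolding valid_dist_def by simp
  have AEpos: "AE z in P. pos_vec z" using v unfolding valid_dist_def by simp
  have invm: "inv_vec \<in> measurable P borel" by (rule meas_P[OF sP]) (rule inv_vec_meas)
  define Q where "Q = distr P borel inv_vec"
  have vQ: "valid_dist Q"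
    unfolding valid_dist_def Q_def
  proof (intro conjI)
    show "prob_space (distr P borel inv_vec)" by (rule prob_space_distr[OF invm])
    show "sets (distr P borel inv_vec) = sets borel" by simp
    have "AE z in P. pos_vec (inv_vec z)"
      using AEpos by eventually_elim (simp add: pos_vec_def inv_vec_def)
    then show "AE z in distr P borel inv_vec. pos_vec z"
      by (subst AE_distr_iff[OF invm]) (rule pos_vec_sets)
  qed
  have "distr Q borel inv_vec = distr P borel (inv_vec \<circ> inv_vec)"
    unfolding Q_def by (rule distr_distr[OF inv_vec_meas invm])
  also have "\<dots> = distr P borel (\<lambda>x. x)"
  proof (rule distr_cong_AE)
    show "AE x in P. (inv_vec \<circ> inv_vec) x = x"
      using AEpos by eventually_elim (simp add: pos_vec_def inv_vec_def vec_eq_iff)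
    show "inv_vec \<circ> inv_vec \<in> measurable P borel"
      by (rule meas_P[OF sP]) (rule measurable_comp[OF inv_vec_meas inv_vec_meas])
    show "(\<lambda>x. x) \<in> measurable P borel" by (rule meas_P[OF sP]) (rule measurable_ident_sets[OF refl])
  qed auto
  also have "\<dots> = P" by (rule distr_id2[OF sP[symmetric]])
  finally have "distr Q borel inv_vec = P" .
  with approx_inv_le[OF vQ] show "approx_ratio P \<le> approx_ratio (distr P borel inv_vec)"
    unfolding Q_def by simp
qed

theorem theorem3:
  fixes P :: "(real^'n::finite) measure"
    and \<pi> :: "'n \<Rightarrow> 'n"
    and \<gamma> :: "real^'n \<Rightarrow> real^'n"
  assumes "valid_dist P"
    and "\<gamma> \<in> {id, inv_vec}"
    and "\<pi> permutes UNIV"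
  shows "approx_ratio P = approx_ratio (distr P borel (\<lambda>z. perm_vec \<pi> (\<gamma> z)))"
proof -
  have sP: "sets P = sets borel" using assms(1) unfolding valid_dist_def by simp
  from assms(2) show ?thesis
  proof
    assume g: "\<gamma> = id"
    have "(\<lambda>z. perm_vec \<pi> (\<gamma> z)) = perm_vec \<pi>" using g by (simp add: fun_eq_iff)
    then show ?thesis using approx_perm[OF assms(3) sP] by simp
  next
    assume "\<gamma> \<in> {inv_vec}"
    then have g: "\<gamma> = inv_vec" by simp
    have invm: "inv_vec \<in> measurable P borel" by (rule meas_P[OF sP]) (rule inv_vec_meas)
    have "distr P borel (\<lambda>z. perm_vec \<pi> (\<gamma> z)) = distr (distr P borel inv_vec) borel (perm_vec \<pi>)"
      using distr_distr[OF perm_vec_meas invm] g by (simp add: comp_def)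
    then show ?thesis
      using approx_perm[OF assms(3), of "distr P borel inv_vec"] approx_inv_eq[OF assms(1)] by simp
  qed
qed

end
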